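(* Assume the standing setting below. Every separating measure $\mathsf Q$ for $R$ satisfies $$v_{\mathrm{MMV}}(0)\le\frac12\mathrm{Var}\Big(\frac{d\mathsf Q}{d\mathsf P}\Big).$$
   Context: Standing setting. $R$ is an $\mathbb{R}^d$-valued semimartingale on $[0,T]$ with $R_0=0$, independent increments, and instantaneously arbitrage-free. Instantaneous no-arbitrage means the following: - Let $h(x)=(x_i\mathbf 1_{\{|x_i|\le1\}})_i$, let $A$ be a deterministic right-continuous non-decreasing process, and let $(b^{R[1]},c^R,F^R)$ be deterministic differential characteristics of $R$ relative to $A$. - For all $t$ and row vectors $\lambda$: if $\lambda c^R_t=0$ and $F^R_t(\{\lambda x<0\})=0$, then either $F^R_t(\{\lambda x>0\})>0$ and $\lambda b^{R[1]}_t-\int\lambda h\,dF^R_t<0$, or $F^R_t(\{\lambda x>0\})=0$ and $\lambda b^{R[1]}_t=0$. Definitions. - $\Theta_{\mathrm{MMV}}$ is the set of $R$-integrable predictable $\vartheta$ with $\sup_{t\le T}(\vartheta\cdot R_t)^-\in L^2$. - $V_{\mathrm{MMV}}(W)=\sup_{Y\ge0,\,W-Y\in L^2}\big(\mathsf E[W-Y]-\frac12\mathrm{Var}(W-Y)\big)$. - $v_{\mathrm{MMV}}(0)=\sup_{\vartheta\in\Theta_{\mathrm{MMV}}}V_{\mathrm{MMV}}(\vartheta\cdot R_T)$. - A separating measure is a probability measure $\mathsf Q\ll\mathsf P$ with $d\mathsf Q/d\mathsf P\in L^2(\mathsf P)$ such that, for all $\vartheta\in\Theta_{\mathrm{MMV}}$,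 $\vartheta\cdot R_T\in L^1(\mathsf Q)$ and $\mathsf E^{\mathsf Q}[\vartheta\cdot R_T]\le0$. *)

theory Defs
  imports "HOL-Probability.Probability"
begin

definition L2 :: "'a measure \<Rightarrow> ('a \<Rightarrow> real) \<Rightarrow> bool" where
  "L2 M X \<longleftrightarrow> X \<in> borel_measurable M \<and> integrable M (\<lambda>x. (X x)\<^sup>2)"

text \<open>Monotone mean-variance value of a terminal wealth W (sup in ereal; empty sup = -infinity).\<close>
definition V_MMV :: "'a measure \<Rightarrow> ('a \<Rightarrow> real) \<Rightarrow> ereal" where
  "V_MMV M W = (SUP Y \<in> {Y. Y \<in> borel_measurable M \<and> (\<forall>x\<in>space M. 0 \<le> Y x)
                           \<and> L2 M (\<lambda>x. W x - Y x)}.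
      ereal ((\<integral>x. W x - Y x \<partial>M) - 1/2 * prob_space.variance M (\<lambda>x. W x - Y x)))"

text \<open>Optimal MMV value from zero initial wealth, where G is the set of terminal
  gains {theta . R_T | theta in Theta_MMV}.\<close>
definition v_MMV0 :: "'a measure \<Rightarrow> ('a \<Rightarrow> real) set \<Rightarrow> ereal" where
  "v_MMV0 M G = (SUP X \<in> G. V_MMV M X)"

definition separating_measure :: "'a measure \<Rightarrow> ('a \<Rightarrow> real) set \<Rightarrow> 'a measure \<Rightarrow> bool" where
  "separating_measure M G Q \<longleftrightarrow>
     prob_space Q \<and> sets Q = sets M \<and> absolutely_continuous M Q \<and>
     L2 M (\<lambda>x. enn2real (RN_deriv M Q x)) \<and>
     (\<forall>X\<in>G. integrable Q X \<and> (\<integral>x. X x \<partial>Q) \<le> 0)"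

end

theory Submission
  imports Defs
begin

lemma L2_integrable:
  assumes "prob_space M" "L2 M f"
  shows "integrable M f"
proof -
  interpret prob_space M by fact
  have m: "f \<in> borel_measurable M" and i: "integrable M (\<lambda>x. (f x)\<^sup>2)"
    using assms(2) unfolding L2_def by blast+
  show ?thesis by (rule square_integrable_imp_integrable[OF m i])
qed

lemma sq_bound: "\<bar>(a::real) * b\<bar> \<le> a\<^sup>2 + b\<^sup>2"
proof -
  have "0 \<le> (\<bar>a\<bar> - \<bar>b\<bar>)\<^sup>2" by (rule zero_le_power2)
  also have "\<dots> = a\<^sup>2 + b\<^sup>2 - 2 * (\<bar>a\<bar> * \<bar>b\<bar>)" unfolding power2_diff by simp
  finally have "2 * (\<bar>a\<bar> * \<bar>b\<bar>) \<le> a\<^sup>2 + b\<^sup>2" by linarith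
  moreover have "0 \<le> \<bar>a\<bar> * \<bar>b\<bar>" by (rule mult_nonneg_nonneg) simp_all
  ultimately show ?thesis unfolding abs_mult by linarith
qed

lemma L2_prod_integrable:
  assumes "L2 M f" "L2 M g"
  shows "integrable M (\<lambda>x. f x * g x)"
proof -
  have m: "f \<in> borel_measurable M" "g \<in> borel_measurable M"
    and i: "integrable M (\<lambda>x. (f x)\<^sup>2)" "integrable M (\<lambda>x. (g x)\<^sup>2)"
    using assms unfolding L2_def by blast+
  have i2: "integrable M (\<lambda>x. (f x)\<^sup>2 + (g x)\<^sup>2)" by (rule Bochner_Integration.integrable_add[OF i])
  have m2: "(\<lambda>x. f x * g x) \<in> borel_measurable M" by (rule borel_measurable_times[OF m])
  have b: "AE x in M. norm (f x * g x) \<le> norm ((f x)\<^sup>2 + (g x)\<^sup>2)"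
  proof (rule AE_I2)
    fix x
    have "0 \<le> (f x)\<^sup>2 + (g x)\<^sup>2" by simp
    then show "norm (f x * g x) \<le> norm ((f x)\<^sup>2 + (g x)\<^sup>2)" using sq_bound[of "f x" "g x"] by simp
  qed
  show ?thesis by (rule Bochner_Integration.integrable_bound[OF i2 m2 b])
qed

lemma core:
  assumes "prob_space M" "L2 M W" "L2 M Z" "integral\<^sup>L M Z = 1"
    "integral\<^sup>L M (\<lambda>x. Z x * W x) \<le> 0"
  shows "integral\<^sup>L M W - 1/2 * prob_space.variance M W \<le> 1/2 * prob_space.variance M Z"
proof -
  interpret prob_space M by fact
  have iW: "integrable M W" using L2_integrable[OF assms(1,2)] .
  have iW2: "integrable M (\<lambda>x. (W x)\<^sup>2)" using assms(2) unfolding L2_def by blast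
  have iZ: "integrable M Z" using L2_integrable[OF assms(1,3)] .
  have iZ2: "integrable M (\<lambda>x. (Z x)\<^sup>2)" using assms(3) unfolding L2_def by blast
  have iZW: "integrable M (\<lambda>x. Z x * W x)" using L2_prod_integrable[OF assms(3,2)] .
  define a where "a = integral\<^sup>L M W"
  define k where "k = 2 * (a + 1)"
  have "0 \<le> integral\<^sup>L M (\<lambda>x. (W x - a + Z x - 1)\<^sup>2)"
    by (rule Bochner_Integration.integral_nonneg) simp
  also have "(\<lambda>x. (W x - a + Z x - 1)\<^sup>2) = (\<lambda>x. ((W x)\<^sup>2 + (Z x)\<^sup>2 + 2 * (Z x * W x) - k * W x - k * Z x) + (a+1)\<^sup>2)"
    by (rule ext) (simp add: k_def power2_eq_square algebra_simps)
  also have "integral\<^sup>L M \<dots> = integral\<^sup>L M (\<lambda>x. (W x)\<^sup>2) + integral\<^sup>L M (\<lambda>x. (Z x)\<^sup>2) + 2 * integral\<^sup>L M (\<lambda>x. Z x * W x) - k * a - k * 1 + (a+1)\<^sup>2"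
  proof -
    have i1: "integrable M (\<lambda>x. (W x)\<^sup>2 + (Z x)\<^sup>2)" by (rule Bochner_Integration.integrable_add[OF iW2 iZ2])
    have i2: "integrable M (\<lambda>x. 2 * (Z x * W x))" by (rule integrable_mult_right[OF iZW])
    have i3: "integrable M (\<lambda>x. k * W x)" by (rule integrable_mult_right[OF iW])
    have i4: "integrable M (\<lambda>x. k * Z x)" by (rule integrable_mult_right[OF iZ])
    have i12: "integrable M (\<lambda>x. (W x)\<^sup>2 + (Z x)\<^sup>2 + 2 * (Z x * W x))" by (rule Bochner_Integration.integrable_add[OF i1 i2])
    have i123: "integrable M (\<lambda>x. (W x)\<^sup>2 + (Z x)\<^sup>2 + 2 * (Z x * W x) - k * W x)" by (rule Bochner_Integration.integrable_diff[OF i12 i3])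
    have i1234: "integrable M (\<lambda>x. (W x)\<^sup>2 + (Z x)\<^sup>2 + 2 * (Z x * W x) - k * W x - k * Z x)" by (rule Bochner_Integration.integrable_diff[OF i123 i4])
    have ic: "integrable M (\<lambda>x. (a+1)\<^sup>2)" by (rule integrable_const)
    have "integral\<^sup>L M (\<lambda>x. ((W x)\<^sup>2 + (Z x)\<^sup>2 + 2 * (Z x * W x) - k * W x - k * Z x) + (a+1)\<^sup>2)
      = integral\<^sup>L M (\<lambda>x. (W x)\<^sup>2 + (Z x)\<^sup>2 + 2 * (Z x * W x) - k * W x - k * Z x) + integral\<^sup>L M (\<lambda>x. (a+1)\<^sup>2)"
      by (rule Bochner_Integration.integral_add[OF i1234 ic])
    also have "integral\<^sup>L M (\<lambda>x. (a+1)\<^sup>2) = (a+1)\<^sup>2" by (simp add: prob_space)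
    also have "integral\<^sup>L M (\<lambda>x. (W x)\<^sup>2 + (Z x)\<^sup>2 + 2 * (Z x * W x) - k * W x - k * Z x)
      = integral\<^sup>L M (\<lambda>x. (W x)\<^sup>2 + (Z x)\<^sup>2 + 2 * (Z x * W x) - k * W x) - integral\<^sup>L M (\<lambda>x. k * Z x)"
      by (rule Bochner_Integration.integral_diff[OF i123 i4])
    also have "integral\<^sup>L M (\<lambda>x. (W x)\<^sup>2 + (Z x)\<^sup>2 + 2 * (Z x * W x) - k * W x)
      = integral\<^sup>L M (\<lambda>x. (W x)\<^sup>2 + (Z x)\<^sup>2 + 2 * (Z x * W x)) - integral\<^sup>L M (\<lambda>x. k * W x)"
      by (rule Bochner_Integration.integral_diff[OF i12 i3])
    also have "integral\<^sup>L M (\<lambda>x. (W x)\<^sup>2 + (Z x)\<^sup>2 + 2 * (Z x * W x))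
      = integral\<^sup>L M (\<lambda>x. (W x)\<^sup>2 + (Z x)\<^sup>2) + integral\<^sup>L M (\<lambda>x. 2 * (Z x * W x))"
      by (rule Bochner_Integration.integral_add[OF i1 i2])
    also have "integral\<^sup>L M (\<lambda>x. (W x)\<^sup>2 + (Z x)\<^sup>2) = integral\<^sup>L M (\<lambda>x. (W x)\<^sup>2) + integral\<^sup>L M (\<lambda>x. (Z x)\<^sup>2)"
      by (rule Bochner_Integration.integral_add[OF iW2 iZ2])
    also have "integral\<^sup>L M (\<lambda>x. 2 * (Z x * W x)) = 2 * integral\<^sup>L M (\<lambda>x. Z x * W x)"
      by simp
    also have "integral\<^sup>L M (\<lambda>x. k * W x) = k * a" unfolding a_def by simp
    also have "integral\<^sup>L M (\<lambda>x. k * Z x) = k * 1" using assms(4) by simp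
    finally show ?thesis .
  qed
  finally have A: "0 \<le> integral\<^sup>L M (\<lambda>x. (W x)\<^sup>2) + integral\<^sup>L M (\<lambda>x. (Z x)\<^sup>2) + 2 * integral\<^sup>L M (\<lambda>x. Z x * W x) - k * a - k * 1 + (a+1)\<^sup>2" .
  have B: "variance W = integral\<^sup>L M (\<lambda>x. (W x)\<^sup>2) - a\<^sup>2" unfolding a_def by (rule variance_eq[OF iW iW2])
  have C: "variance Z = integral\<^sup>L M (\<lambda>x. (Z x)\<^sup>2) - 1" using variance_eq[OF iZ iZ2] assms(4) by simp
  have D: "k * a = 2 * a\<^sup>2 + 2 * a" "(a+1)\<^sup>2 = a\<^sup>2 + 2 * a + 1" "k * 1 = 2 * a + 2" unfolding k_def by (simp_all add: power2_eq_square algebra_simps)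
  have "integral\<^sup>L M W = a" by (simp add: a_def)
  then show ?thesis using A B C D assms(5) by linarith
qed

theorem proposition2p22:
  fixes M :: "'a measure" and G :: "('a \<Rightarrow> real) set" and Q :: "'a measure"
  assumes "prob_space M"
    and "\<forall>X\<in>G. X \<in> borel_measurable M \<and> L2 M (\<lambda>x. max 0 (- X x))"
    and "(\<lambda>x. 0) \<in> G"
    and "separating_measure M G Q"
  shows "v_MMV0 M G \<le> ereal (1/2 * prob_space.variance M (\<lambda>x. enn2real (RN_deriv M Q x)))"
proof -
  interpret M: prob_space M by fact
  have Qp: "prob_space Q" and sQ: "sets Q = sets M" and ac: "absolutely_continuous M Q"
    and Lz: "L2 M (\<lambda>x. enn2real (RN_deriv M Q x))"
    and sepG: "\<forall>X\<in>G. integrable Q X \<and> (\<integral>x. X x \<partial>Q) \<le> 0"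
    using assms(4) unfolding separating_measure_def by blast+
  interpret Q: prob_space Q by fact
  define z where "z x = enn2real (RN_deriv M Q x)" for x
  have zm: "z \<in> borel_measurable M" unfolding z_def by measurable
  have znn: "AE x in M. 0 \<le> z x" unfolding z_def by (rule AE_I2) (rule enn2real_nonneg)
  have Lz': "L2 M z" using Lz unfolding z_def[abs_def] .
  have d1: "density M (RN_deriv M Q) = Q" by (rule M.density_RN_deriv[OF ac sQ])
  have sfQ: "sigma_finite_measure Q" by (rule Q.sigma_finite_measure_axioms)
  have fin: "AE x in M. RN_deriv M Q x \<noteq> \<infinity>"
    by (rule M.RN_deriv_finite[OF sfQ ac sQ])
  have Qd: "Q = density M (\<lambda>x. ennreal (z x))"
  proof -
    have "AE x in M. RN_deriv M Q x = ennreal (z x)"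
      using fin by eventually_elim (simp add: z_def less_top)
    then have "density M (RN_deriv M Q) = density M (\<lambda>x. ennreal (z x))"
      using zm by (intro density_cong) simp_all
    then show ?thesis using d1 by simp
  qed
  have spQ: "space Q = space M" using sQ by (rule sets_eq_imp_space_eq)
  have Ez: "integral\<^sup>L M z = 1"
  proof -
    have "integral\<^sup>L Q (\<lambda>x. 1::real) = 1" by (simp add: Q.prob_space)
    moreover have "integral\<^sup>L Q (\<lambda>x. 1::real) = integral\<^sup>L M (\<lambda>x. z x *\<^sub>R 1)"
      unfolding Qd by (rule integral_density[OF _ zm znn]) simp
    ultimately show ?thesis by simp
  qed
  have key: "(\<integral>x. X x - Y x \<partial>M) - 1/2 * M.variance (\<lambda>x. X x - Y x) \<le> 1/2 * M.variance z"
    if XG: "X \<in> G" and Ynn: "\<forall>x\<in>space M. 0 \<le> Y x"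
      and LW: "L2 M (\<lambda>x. X x - Y x)" for X Y
  proof -
    have Wm: "(\<lambda>x. X x - Y x) \<in> borel_measurable M" using LW unfolding L2_def by blast
    have izW: "integrable M (\<lambda>x. z x * (X x - Y x))" using L2_prod_integrable[OF Lz' LW] .
    have iQW: "integrable Q (\<lambda>x. X x - Y x)"
      unfolding Qd using izW by (subst integrable_density[OF Wm zm znn]) simp
    have EQW: "integral\<^sup>L Q (\<lambda>x. X x - Y x) = integral\<^sup>L M (\<lambda>x. z x * (X x - Y x))"
      unfolding Qd by (subst integral_density[OF Wm zm znn]) simp
    have iQX: "integrable Q X" and EQX: "integral\<^sup>L Q X \<le> 0" using sepG XG by blast+
    have iQY: "integrable Q Y"
    proof -
      have "integrable Q (\<lambda>x. X x - (X x - Y x))" using iQX iQW by (rule Bochner_Integration.integrable_diff)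
      then show ?thesis by simp
    qed
    have EQY: "0 \<le> integral\<^sup>L Q Y"
    proof (rule Bochner_Integration.integral_nonneg)
      fix x assume "x \<in> space Q" then show "0 \<le> Y x" using Ynn spQ by blast
    qed
    have "integral\<^sup>L Q (\<lambda>x. X x - Y x) = integral\<^sup>L Q X - integral\<^sup>L Q Y"
      using iQX iQY by (rule Bochner_Integration.integral_diff)
    then have "integral\<^sup>L M (\<lambda>x. z x * (X x - Y x)) \<le> 0" using EQW EQX EQY by linarith
    then show ?thesis using core[OF assms(1) LW Lz' Ez] by simp
  qed
  show ?thesis
    unfolding v_MMV0_def V_MMV_def
  proof (intro SUP_least)
    fix X Y assume XG: "X \<in> G" and Y: "Y \<in> {Y. Y \<in> borel_measurable M \<and> (\<forall>x\<in>space M. 0 \<le> Y x) \<and> L2 M (\<lambda>x. X x - Y x)}"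
    have "(\<integral>x. X x - Y x \<partial>M) - 1/2 * M.variance (\<lambda>x. X x - Y x) \<le> 1/2 * M.variance z"
      using Y by (intro key[OF XG]) blast+
    then show "ereal ((\<integral>x. X x - Y x \<partial>M) - 1/2 * M.variance (\<lambda>x. X x - Y x))
       \<le> ereal (1/2 * M.variance (\<lambda>x. enn2real (RN_deriv M Q x)))"
      unfolding z_def[abs_def] by simp
  qed
qed

end
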